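(* Let $B$ be a C*-algebra and $A\subseteq B$ a closed *-subalgebra satisfying the ideal intersection property and axiom (inv) relative to $B$. Then for every closed two-sided ideal $J$ of $B$: (i) $\mathrm{Ann}_B(J\cap A)=\mathrm{Ann}_B(J)$, and (ii) $\mathrm{Ann}_A(J\cap A)=\mathrm{Ann}_B(J)\cap A$.
   Context: For a C*-algebra $C$ and $S\subseteq C$, $[S]$ is the closed linear span, and $S$ is $C$-invariant if $[SC]=[CS]$. For $C$-invariant $S$, $\{x\in C: xs=0\ \forall s\in S\}=\{x\in C: sx=0\ \forall s\in S\}$, denoted $\mathrm{Ann}_C(S)$. $A$ satisfies the ideal intersection property relative to $B$ if $J\cap A\neq\{0\}$ for every nonzero closed two-sided ideal $J$ of $B$. $A$ satisfies axiom (inv) relative to $B$ if $J\cap A$ is $B$-invariant for every closed two-sided ideal $J$ of $B$. *)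

theory Defs
  imports "HOL-Analysis.Analysis"
begin

class cstar_algebra = real_normed_algebra + banach +
  fixes adj :: "'a \<Rightarrow> 'a"
    and cscale :: "complex \<Rightarrow> 'a \<Rightarrow> 'a"
  assumes cscale_of_real: "cscale (complex_of_real r) x = scaleR r x"
    and cscale_add_left: "cscale (a + b) x = cscale a x + cscale b x"
    and cscale_add_right: "cscale a (x + y) = cscale a x + cscale a y"
    and cscale_cscale: "cscale a (cscale b x) = cscale (a * b) x"
    and cscale_mult_left: "cscale a (x * y) = cscale a x * y"
    and cscale_mult_right: "cscale a (x * y) = x * cscale a y"
    and norm_cscale: "norm (cscale a x) = cmod a * norm x"
    and adj_adj: "adj (adj x) = x"
    and adj_add: "adj (x + y) = adj x + adj y"
    and adj_cscale: "adj (cscale a x) = cscale (cnj a) (adj x)"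
    and adj_mult: "adj (x * y) = adj y * adj x"
    and cstar_identity: "norm (adj x * x) = (norm x)\<^sup>2"

definition cspan :: "'a::cstar_algebra set \<Rightarrow> 'a set" where
  "cspan S = {x. \<exists>F c. finite F \<and> F \<subseteq> S \<and> x = (\<Sum>s\<in>F. cscale (c s) s)}"

definition clspan :: "'a::cstar_algebra set \<Rightarrow> 'a set" where
  "clspan S = closure (cspan S)"

definition invariant :: "'a::cstar_algebra set \<Rightarrow> 'a set \<Rightarrow> bool" where
  "invariant C S \<longleftrightarrow>
     clspan {s * c | s c. s \<in> S \<and> c \<in> C} = clspan {c * s | s c. s \<in> S \<and> c \<in> C}"

text \<open>Annihilator (for invariant S, left and right annihilators agree; we use
  the first description from the paper).\<close>
definition Ann :: "'a::cstar_algebra set \<Rightarrow> 'a set \<Rightarrow> 'a set" where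
  "Ann C S = {x \<in> C. \<forall>s\<in>S. x * s = 0}"

definition complex_subspace :: "'a::cstar_algebra set \<Rightarrow> bool" where
  "complex_subspace S \<longleftrightarrow> 0 \<in> S \<and> (\<forall>x\<in>S. \<forall>y\<in>S. x + y \<in> S)
     \<and> (\<forall>a. \<forall>x\<in>S. cscale a x \<in> S)"

definition closed_star_subalgebra :: "'a::cstar_algebra set \<Rightarrow> bool" where
  "closed_star_subalgebra A \<longleftrightarrow> complex_subspace A \<and> closed A
     \<and> (\<forall>x\<in>A. \<forall>y\<in>A. x * y \<in> A) \<and> (\<forall>x\<in>A. adj x \<in> A)"

text \<open>Closed two-sided ideal of the ambient C*-algebra (the whole type).\<close>
definition closed_ideal :: "'a::cstar_algebra set \<Rightarrow> bool" where
  "closed_ideal J \<longleftrightarrow> complex_subspace J \<and> closed J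
     \<and> (\<forall>x\<in>J. \<forall>c. c * x \<in> J \<and> x * c \<in> J)"

definition ideal_intersection_property :: "'a::cstar_algebra set \<Rightarrow> bool" where
  "ideal_intersection_property A \<longleftrightarrow>
     (\<forall>J. closed_ideal J \<and> J \<noteq> {0} \<longrightarrow> J \<inter> A \<noteq> {0})"

definition axiom_inv :: "'a::cstar_algebra set \<Rightarrow> bool" where
  "axiom_inv A \<longleftrightarrow> (\<forall>J. closed_ideal J \<longrightarrow> invariant UNIV (J \<inter> A))"

end

theory Submission
  imports Defs
begin

lemma cscale_zero_r: "cscale a (0::'a::cstar_algebra) = 0"
  by (metis cscale_mult_left mult_zero_right)

lemma closed_left_zero: "closed {t::'a::cstar_algebra. x * t = 0}"
proof -
  have "continuous_on UNIV (\<lambda>t::'a. x * t)"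
    by (intro continuous_intros)
  then show ?thesis using closed_vimage[of "{0}" "\<lambda>t. x * t"] by (simp add: vimage_def)
qed

lemma clspan_left_zero:
  fixes x :: "'a::cstar_algebra"
  assumes "\<forall>s\<in>S. x * s = 0" and "t \<in> clspan S"
  shows "x * t = 0"
proof -
  have "cspan S \<subseteq> {t. x * t = 0}"
  proof
    fix t assume "t \<in> cspan S"
    then obtain F c where F: "finite F" "F \<subseteq> S" "t = (\<Sum>s\<in>F. cscale (c s) s)"
      unfolding cspan_def by blast
    have "x * t = (\<Sum>s\<in>F. x * cscale (c s) s)" using F by (simp add: sum_distrib_left)
    also have "\<dots> = (\<Sum>s\<in>F. cscale (c s) (x * s))" by (simp add: cscale_mult_right)
    also have "\<dots> = 0" using F assms(1) by (auto intro!: sum.neutral simp: cscale_zero_r)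
    finally show "t \<in> {t. x * t = 0}" by simp
  qed
  then have "closure (cspan S) \<subseteq> {t. x * t = 0}"
    using closed_left_zero by (rule closure_minimal)
  then show ?thesis using assms(2) unfolding clspan_def by auto
qed

lemma cstar_zero:
  fixes y :: "'a::cstar_algebra"
  assumes "y * (adj y * y) = 0"
  shows "y = 0"
proof -
  define z where "z = adj y * y"
  have za: "adj z = z" unfolding z_def by (simp add: adj_mult adj_adj)
  have "z * z = adj y * (y * (adj y * y))" unfolding z_def by (simp add: mult.assoc)
  then have "z * z = 0" using assms by simp
  then have "(norm z)\<^sup>2 = 0" using cstar_identity[of z] za by simp
  then have "z = 0" by simp
  then have "(norm y)\<^sup>2 = 0" using cstar_identity[of y] unfolding z_def by simp
  then show ?thesis by simp
qed

theorem corollary3p4: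
  fixes A J :: "'a::cstar_algebra set"
  assumes "closed_star_subalgebra A"
    and "ideal_intersection_property A"
    and "axiom_inv A"
    and "closed_ideal J"
  shows "Ann UNIV (J \<inter> A) = Ann UNIV J \<and> Ann A (J \<inter> A) = Ann UNIV J \<inter> A"
proof -
  define K where "K = Ann UNIV (J \<inter> A)"
  have inv: "invariant UNIV (J \<inter> A)" using assms(3) assms(4) unfolding axiom_inv_def by blast
  have Jid: "\<And>x c. x \<in> J \<Longrightarrow> c * x \<in> J \<and> x * c \<in> J" using assms(4) unfolding closed_ideal_def by blast
  have Jsub: "complex_subspace J" "closed J" using assms(4) unfolding closed_ideal_def by auto
  have Kmem: "x \<in> K \<longleftrightarrow> (\<forall>s\<in>J \<inter> A. x * s = 0)" for x unfolding K_def Ann_def by auto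
  have Kleft: "c * x \<in> K" if "x \<in> K" for x c
    using that unfolding Kmem by (simp add: mult.assoc)
  have Kright: "x * c \<in> K" if "x \<in> K" for x c
  proof -
    have "x * (c * s) = 0" if s: "s \<in> J \<inter> A" for s
    proof -
      have "c * s \<in> cspan {c * s | s c. s \<in> J \<inter> A \<and> c \<in> UNIV}"
        unfolding cspan_def
        apply (rule CollectI, rule exI[of _ "{c * s}"], rule exI[of _ "\<lambda>_. 1"])
        using s by (auto simp: cscale_of_real[of 1, simplified])
      then have "c * s \<in> clspan {s * c | s c. s \<in> J \<inter> A \<and> c \<in> UNIV}"
        using inv unfolding invariant_def clspan_def using closure_subset by blast
      moreover have "\<forall>t\<in>{s * c | s c. s \<in> J \<inter> A \<and> c \<in> UNIV}. x * t = 0"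
        using \<open>x \<in> K\<close> unfolding Kmem by (auto simp: mult.assoc[symmetric])
      ultimately show ?thesis using clspan_left_zero by blast
    qed
    then show ?thesis unfolding Kmem by (simp add: mult.assoc)
  qed
  have Kclosed: "closed K"
  proof -
    have "K = (\<Inter>s\<in>J \<inter> A. {x. x * s = 0})" using Kmem by blast
    moreover have "closed {x::'a. x * s = 0}" for s
    proof -
      have "continuous_on UNIV (\<lambda>x::'a. x * s)" by (intro continuous_intros)
      then show ?thesis using closed_vimage[of "{0}" "\<lambda>x. x * s"] by (simp add: vimage_def)
    qed
    ultimately show ?thesis by auto
  qed
  have Ksub: "complex_subspace K"
    unfolding complex_subspace_def using Kmem
    by (auto simp: distrib_right cscale_mult_left[symmetric] cscale_zero_r)
  have KJ: "closed_ideal (K \<inter> J)"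
    using Ksub Jsub Kclosed Kleft Kright Jid
    unfolding closed_ideal_def complex_subspace_def by auto
  have KJA: "K \<inter> J \<inter> A = {0}"
  proof -
    have "y = 0" if y: "y \<in> K \<inter> J \<inter> A" for y
    proof -
      have "adj y \<in> A" using y assms(1) unfolding closed_star_subalgebra_def by auto
      then have "adj y * y \<in> A" using y assms(1) unfolding closed_star_subalgebra_def by auto
      moreover have "adj y * y \<in> J" using y Jid by auto
      ultimately have "y * (adj y * y) = 0" using y Kmem by auto
      then show ?thesis by (rule cstar_zero)
    qed
    moreover have "0 \<in> K \<inter> J \<inter> A" using Ksub Jsub assms(1)
      unfolding complex_subspace_def closed_star_subalgebra_def by auto
    ultimately show ?thesis by auto
  qed
  have KJ0: "K \<inter> J = {0}"
    using assms(2) KJ KJA unfolding ideal_intersection_property_def by (metis Int_assoc)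
  have i: "K = Ann UNIV J"
  proof
    show "K \<subseteq> Ann UNIV J"
    proof
      fix x assume "x \<in> K"
      have "x * j = 0" if "j \<in> J" for j
        using Kright[OF \<open>x \<in> K\<close>, of j] Jid[OF that, of x] KJ0 by auto
      then show "x \<in> Ann UNIV J" unfolding Ann_def by auto
    qed
    show "Ann UNIV J \<subseteq> K" unfolding K_def Ann_def by auto
  qed
  have "Ann A (J \<inter> A) = K \<inter> A" unfolding K_def Ann_def by auto
  with i show ?thesis unfolding K_def by simp
qed

end
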